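(* Let $T:\mathbb{Z}^d\curvearrowright(X,\mu)$ be an ergodic measure preserving action, let $q$ be a positive integer and $\delta>0$, and suppose $B\subset X$ is $(q,\delta)$-equidistributed. Let $h\in L^2(X,\mu)$ be the orthogonal projection of $\mathbb{1}_B$ onto $\mathrm{Eig}_T(R_q^* )$. Then $P_{T^q}\mathbb{1}_B=\mu(B)+h$ and $\|h\|_2\le\sqrt{2\delta+\delta^2}\,\mu(B)$.
   Context: Let $F_n=[1,n]^d\cap\mathbb{Z}^d$. $B$ is $(q,\delta)$-equidistributed if for $\mu$-a.e. $x$, $\lim_{n\to\infty}\frac{1}{|F_n|}|\{a\in F_n:T^{qa}x\in B\}|\le(1+\delta)\mu(B)$. $T^q$ is the action $a\mapsto T^{qa}$ and $P_{T^q}$ is the orthogonal projection of $L^2(X,\mu)$ onto the $T^q$-invariant functions. For a character $\chi$ of $\mathbb{Z}^d$, $f\in L^2$ is a $\chi$-eigenfunction if $f\circ T^a=\chi(a)f$ for all $a\in\mathbb{Z}^d$ (here $T^af:=f\circ T^a$); for a set $R$ of characters, $\mathrm{Eig}_T(R)$ is the closed linear span of all $\chi$-eigenfunctions with $\chi\in R$. $R_q=\{\chi:\chi^q=1\}$ and $R_q^*=R_q\setminus\{1\}$. *)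

theory Defs
  imports "HOL-Probability.Probability"
begin

text \<open>A measure preserving action of the group of integer vectors (index type 'd, so d = CARD('d))
  on the space M, given by T :: int^'d => 'a => 'a.\<close>
definition mp_action :: "'a measure \<Rightarrow> (int^'d \<Rightarrow> 'a \<Rightarrow> 'a) \<Rightarrow> bool" where
  "mp_action M T \<longleftrightarrow>
     (\<forall>a. T a \<in> measurable M M \<and> distr M M (T a) = M) \<and>
     (\<forall>x\<in>space M. T 0 x = x) \<and>
     (\<forall>a b. \<forall>x\<in>space M. T (a + b) x = T a (T b x))"

definition ergodic_action :: "'a measure \<Rightarrow> (int^'d \<Rightarrow> 'a \<Rightarrow> 'a) \<Rightarrow> bool" where
  "ergodic_action M T \<longleftrightarrow> mp_action M T \<and>
     (\<forall>A\<in>sets M. (\<forall>a. T a -` A \<inter> space M = A) \<longrightarrow> measure M A = 0 \<or> measure M A = 1)"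

definition box :: "nat \<Rightarrow> (int^'d) set" where
  "box n = {a. \<forall>i. 1 \<le> a $ i \<and> a $ i \<le> int n}"

definition equidistributed ::
  "'a measure \<Rightarrow> (int^'d \<Rightarrow> 'a \<Rightarrow> 'a) \<Rightarrow> nat \<Rightarrow> real \<Rightarrow> 'a set \<Rightarrow> bool" where
  "equidistributed M T q \<delta> B \<longleftrightarrow>
     (AE x in M. \<exists>L. (\<lambda>n. real (card {a \<in> (box n :: (int^'d) set). T (int q *s a) x \<in> B})
                            / real (card (box n :: (int^'d) set))) \<longlonglongrightarrow> L
                    \<and> L \<le> (1 + \<delta>) * measure M B)"

text \<open>Complex L^2(M) (functions, equality a.e. handled in the statements).\<close>
definition L2 :: "'a measure \<Rightarrow> ('a \<Rightarrow> complex) set" where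
  "L2 M = {f. f \<in> borel_measurable M \<and> integrable M (\<lambda>x. (cmod (f x))\<^sup>2)}"

definition L2_norm :: "'a measure \<Rightarrow> ('a \<Rightarrow> complex) \<Rightarrow> real" where
  "L2_norm M f = sqrt (integral\<^sup>L M (\<lambda>x. (cmod (f x))\<^sup>2))"

definition L2_inner :: "'a measure \<Rightarrow> ('a \<Rightarrow> complex) \<Rightarrow> ('a \<Rightarrow> complex) \<Rightarrow> complex" where
  "L2_inner M f g = integral\<^sup>L M (\<lambda>x. f x * cnj (g x))"

definition is_orth_proj ::
  "'a measure \<Rightarrow> ('a \<Rightarrow> complex) \<Rightarrow> ('a \<Rightarrow> complex) set \<Rightarrow> ('a \<Rightarrow> complex) \<Rightarrow> bool" where
  "is_orth_proj M f V h \<longleftrightarrow> h \<in> V \<and> (\<forall>v\<in>V. L2_inner M (\<lambda>x. f x - h x) v = 0)"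

definition inv_funs :: "'a measure \<Rightarrow> (int^'d \<Rightarrow> 'a \<Rightarrow> 'a) \<Rightarrow> nat \<Rightarrow> ('a \<Rightarrow> complex) set" where
  "inv_funs M T q = {g \<in> L2 M. \<forall>a. AE x in M. g (T (int q *s a) x) = g x}"

definition character :: "(int^'d \<Rightarrow> complex) \<Rightarrow> bool" where
  "character chr \<longleftrightarrow> (\<forall>a b. chr (a + b) = chr a * chr b) \<and> (\<forall>a. cmod (chr a) = 1)"

definition Rq :: "nat \<Rightarrow> (int^'d \<Rightarrow> complex) set" where
  "Rq q = {chr. character chr \<and> (\<forall>a. chr a ^ q = 1)}"

definition Rq_star :: "nat \<Rightarrow> (int^'d \<Rightarrow> complex) set" where
  "Rq_star q = Rq q - {\<lambda>_. 1}"

definition eigenfun :: "'a measure \<Rightarrow> (int^'d \<Rightarrow> 'a \<Rightarrow> 'a) \<Rightarrow> (int^'d \<Rightarrow> complex) \<Rightarrow> ('a \<Rightarrow> complex) \<Rightarrow> bool" where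
  "eigenfun M T chr f \<longleftrightarrow> f \<in> L2 M \<and> (\<forall>a. AE x in M. f (T a x) = chr a * f x)"

text \<open>Linear span of the chi-eigenfunctions, chi in R (finite sums; each eigenspace is a subspace).\<close>
definition eig_lin_span :: "'a measure \<Rightarrow> (int^'d \<Rightarrow> 'a \<Rightarrow> 'a) \<Rightarrow> (int^'d \<Rightarrow> complex) set \<Rightarrow> ('a \<Rightarrow> complex) set" where
  "eig_lin_span M T R = {g. \<exists>F. finite F \<and> (\<forall>f\<in>F. \<exists>chr\<in>R. eigenfun M T chr f) \<and> g = (\<lambda>x. \<Sum>f\<in>F. f x)}"

definition Eig :: "'a measure \<Rightarrow> (int^'d \<Rightarrow> 'a \<Rightarrow> 'a) \<Rightarrow> (int^'d \<Rightarrow> complex) set \<Rightarrow> ('a \<Rightarrow> complex) set" where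
  "Eig M T R = {g \<in> L2 M. \<forall>e>0. \<exists>s\<in>eig_lin_span M T R. L2_norm M (\<lambda>x. g x - s x) < e}"

end

theory Submission
  imports Defs
begin

lemma mp_meas: "mp_action M T \<Longrightarrow> T a \<in> measurable M M"
  by (simp add: mp_action_def)
lemma mp_distr: "mp_action M T \<Longrightarrow> distr M M (T a) = M"
  by (simp add: mp_action_def)
lemma mp_T0: "mp_action M T \<Longrightarrow> x \<in> space M \<Longrightarrow> T 0 x = x"
  by (simp add: mp_action_def)
lemma mp_Tadd: "mp_action M T \<Longrightarrow> x \<in> space M \<Longrightarrow> T (a + b) x = T a (T b x)"
  by (simp add: mp_action_def)
lemma mp_space: "mp_action M T \<Longrightarrow> x \<in> space M \<Longrightarrow> T a x \<in> space M"
  by (rule measurable_space[OF mp_meas])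

lemma mp_integral:
  fixes g :: "'a \<Rightarrow> 'b::{banach, second_countable_topology}"
  assumes "mp_action M T" "g \<in> borel_measurable M"
  shows "(\<integral>x. g (T a x) \<partial>M) = integral\<^sup>L M g"
  using integral_distr[OF mp_meas[OF assms(1)] assms(2)] mp_distr[OF assms(1)] by simp

lemma mp_integrable:
  fixes g :: "'a \<Rightarrow> 'b::{banach, second_countable_topology}"
  assumes "mp_action M T" "g \<in> borel_measurable M" "integrable M g"
  shows "integrable M (\<lambda>x. g (T a x))"
  using integrable_distr_eq[OF mp_meas[OF assms(1)] assms(2)] mp_distr[OF assms(1)] assms(3) by simp

lemma mp_AE:
  assumes "mp_action M T" "AE x in M. P x"
  shows "AE x in M. P (T a x)"
proof -
  from assms(2) obtain N where N: "N \<in> null_sets M" "{x\<in>space M. \<not> P x} \<subseteq> N"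
    by (auto simp: eventually_ae_filter)
  have "emeasure M (T a -` N \<inter> space M) = emeasure (distr M M (T a)) N"
    using emeasure_distr[OF mp_meas[OF assms(1)]] N by auto
  also have "\<dots> = 0" using mp_distr[OF assms(1)] N by auto
  finally have "T a -` N \<inter> space M \<in> null_sets M"
    using N mp_meas[OF assms(1)] by (auto intro: measurable_sets)
  moreover have "{x\<in>space M. \<not> P (T a x)} \<subseteq> T a -` N \<inter> space M"
    using N mp_space[OF assms(1)] by auto
  ultimately show ?thesis by (rule AE_I')
qed

lemma L2_meas: "f \<in> L2 M \<Longrightarrow> f \<in> borel_measurable M"
  by (simp add: L2_def)
lemma L2_sq_int: "f \<in> L2 M \<Longrightarrow> integrable M (\<lambda>x. (cmod (f x))\<^sup>2)"
  by (simp add: L2_def)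

lemma cnj_meas[measurable (raw)]:
  "g \<in> borel_measurable M \<Longrightarrow> (\<lambda>x. cnj (g x)) \<in> borel_measurable M"
  by (rule borel_measurable_continuous_on[OF continuous_on_cnj[OF continuous_on_id]])

lemma X1: fixes a b :: real assumes "0 \<le> a" "0\<le>b" shows "a * b \<le> (a\<^sup>2 + b\<^sup>2) / 2"
  using sum_squares_bound[of a b] by (simp add: power2_eq_square)
lemma X2: fixes u v :: complex shows "(cmod (u + v))\<^sup>2 \<le> 2 * (cmod u)\<^sup>2 + 2 * (cmod v)\<^sup>2"
proof -
      have a: "cmod (u+v) \<le> cmod u + cmod v" by (rule norm_triangle_ineq)
      have "(cmod (u+v))\<^sup>2 \<le> (cmod u + cmod v)\<^sup>2"
        using a by (intro power_mono) auto
      also have "\<dots> \<le> 2 * (cmod u)\<^sup>2 + 2 * (cmod v)\<^sup>2"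
        using sum_squares_bound[of "cmod u" "cmod v"] by (simp add: power2_eq_square algebra_simps)
      finally show ?thesis .
qed

lemma L2_prod_int:
  assumes "f \<in> L2 M" "g \<in> L2 M"
  shows "integrable M (\<lambda>x. f x * cnj (g x))"
proof -
  have i: "integrable M (\<lambda>x. ((cmod (f x))\<^sup>2 + (cmod (g x))\<^sup>2) / 2)"
    using assms by (intro integrable_divide Bochner_Integration.integrable_add L2_sq_int)
  have m: "(\<lambda>x. f x * cnj (g x)) \<in> borel_measurable M"
    using L2_meas[OF assms(1)] L2_meas[OF assms(2)] by measurable
  have "AE x in M. norm (f x * cnj (g x)) \<le> norm (((cmod (f x))\<^sup>2 + (cmod (g x))\<^sup>2) / 2)"
  proof (intro AE_I2)
    fix x
    have "cmod (f x) * cmod (g x) \<le> ((cmod (f x))\<^sup>2 + (cmod (g x))\<^sup>2) / 2"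
      by (rule X1) auto
    thus "norm (f x * cnj (g x)) \<le> norm (((cmod (f x))\<^sup>2 + (cmod (g x))\<^sup>2) / 2)"
      by (simp add: norm_mult)
  qed
  then show ?thesis by (rule Bochner_Integration.integrable_bound[OF i m])
qed

lemma L2_const: "prob_space M \<Longrightarrow> (\<lambda>x. c) \<in> L2 M"
  by (simp add: L2_def prob_space.finite_measure finite_measure.integrable_const)

lemma L2_int:
  assumes "prob_space M" "f \<in> L2 M" shows "integrable M f"
  using L2_prod_int[OF assms(2) L2_const[OF assms(1), of 1]] by simp

lemma L2_add:
  assumes "f \<in> L2 M" "g \<in> L2 M"
  shows "(\<lambda>x. f x + g x) \<in> L2 M"
  unfolding L2_def
proof safe
  show "(\<lambda>x. f x + g x) \<in> borel_measurable M" using assms L2_meas by measurable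
  show "integrable M (\<lambda>x. (cmod (f x + g x))\<^sup>2)"
  proof -
    have i: "integrable M (\<lambda>x. 2 * (cmod (f x))\<^sup>2 + 2 * (cmod (g x))\<^sup>2)"
      using assms by (intro Bochner_Integration.integrable_add integrable_mult_right L2_sq_int)
    have m: "(\<lambda>x. (cmod (f x + g x))\<^sup>2) \<in> borel_measurable M"
      using L2_meas[OF assms(1)] L2_meas[OF assms(2)] by measurable
    have "AE x in M. norm ((cmod (f x + g x))\<^sup>2) \<le> norm (2 * (cmod (f x))\<^sup>2 + 2 * (cmod (g x))\<^sup>2)"
    proof (intro AE_I2)
      fix x
      have "(cmod (f x + g x))\<^sup>2 \<le> 2 * (cmod (f x))\<^sup>2 + 2 * (cmod (g x))\<^sup>2" by (rule X2)
      then show "norm ((cmod (f x + g x))\<^sup>2) \<le> norm (2 * (cmod (f x))\<^sup>2 + 2 * (cmod (g x))\<^sup>2)"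
        by simp
    qed
    then show ?thesis by (rule Bochner_Integration.integrable_bound[OF i m])
  qed
qed

lemma L2_cmult:
  assumes "f \<in> L2 M" shows "(\<lambda>x. c * f x) \<in> L2 M"
  unfolding L2_def
proof safe
  show "(\<lambda>x. c * f x) \<in> borel_measurable M" using L2_meas[OF assms] by measurable
  have eq: "(\<lambda>x. (cmod (c * f x))\<^sup>2) = (\<lambda>x. (cmod c)\<^sup>2 * (cmod (f x))\<^sup>2)"
    by (simp add: norm_mult power_mult_distrib)
  show "integrable M (\<lambda>x. (cmod (c * f x))\<^sup>2)"
    unfolding eq by (rule integrable_mult_right[OF L2_sq_int[OF assms]])
qed

lemma L2_uminus: "f \<in> L2 M \<Longrightarrow> (\<lambda>x. - f x) \<in> L2 M"
  using L2_cmult[of f M "-1"] by simp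

lemma L2_diff:
  assumes "f \<in> L2 M" "g \<in> L2 M"
  shows "(\<lambda>x. f x - g x) \<in> L2 M"
  using L2_add[OF assms(1) L2_uminus[OF assms(2)]] by simp

lemma L2_sum:
  assumes "finite I" "\<And>i. i \<in> I \<Longrightarrow> f i \<in> L2 M"
  shows "(\<lambda>x. \<Sum>i\<in>I. f i x) \<in> L2 M"
  using assms
proof (induction I rule: finite_induct)
  case empty
  then show ?case by (simp add: L2_def)
next
  case (insert a F)
  then show ?case by (simp add: L2_add)
qed

lemma L2_shift:
  assumes "mp_action M T" "f \<in> L2 M"
  shows "(\<lambda>x. f (T a x)) \<in> L2 M"
  unfolding L2_def
proof safe
  show "(\<lambda>x. f (T a x)) \<in> borel_measurable M"
    using mp_meas[OF assms(1)] L2_meas[OF assms(2)] by (rule measurable_compose)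
  show "integrable M (\<lambda>x. (cmod (f (T a x)))\<^sup>2)"
    using mp_integrable[OF assms(1), of "\<lambda>x. (cmod (f x))\<^sup>2"] L2_meas[OF assms(2)] L2_sq_int[OF assms(2)]
    by simp
qed

lemma L2_indicator:
  assumes "prob_space M" "B \<in> sets M"
  shows "(indicator B :: 'a \<Rightarrow> complex) \<in> L2 M"
  unfolding L2_def
proof safe
  show "(indicator B :: 'a \<Rightarrow> complex) \<in> borel_measurable M" using assms by measurable
  have "integrable M (\<lambda>x. indicator B x :: real)"
    using finite_measure.emeasure_finite[OF prob_space.finite_measure[OF assms(1)], of B] assms(2)
    by (simp add: integrable_indicator_iff less_top)
  moreover have "(\<lambda>x. (cmod (indicator B x :: complex))\<^sup>2) = (\<lambda>x. indicator B x :: real)"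
    by (auto simp: indicator_def)
  ultimately show "integrable M (\<lambda>x. (cmod (indicator B x :: complex))\<^sup>2)" by simp
qed


lemma char_zero: "character chr \<Longrightarrow> chr 0 = 1"
proof -
  assume c: "character chr"
  have "chr 0 = chr 0 * chr 0" using c unfolding character_def by (metis add_0)
  moreover have "chr 0 \<noteq> 0" using c unfolding character_def by (metis norm_zero zero_neq_one)
  ultimately show ?thesis by (metis mult_cancel_left2)
qed

lemma char_pow: "character chr \<Longrightarrow> chr (int n *s a) = chr a ^ n"
proof (induction n)
  case 0
  have "(int 0 *s a) = 0" by (simp add: vec_eq_iff)
  then show ?case using char_zero[OF 0] by simp
next
  case (Suc n)
  have "int (Suc n) *s a = a + int n *s a" by (simp add: vec_eq_iff algebra_simps)
  then have "chr (int (Suc n) *s a) = chr a * chr (int n *s a)"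
    using Suc.prems unfolding character_def by simp
  then show ?case using Suc by simp
qed

context
  fixes M :: "'a measure" and T :: "int^'d \<Rightarrow> 'a \<Rightarrow> 'a" and q :: nat
  assumes P: "prob_space M" and MP: "mp_action M T"
begin

lemma eig_int_zero:
  assumes e: "eigenfun M T chr f" and nt: "chr \<noteq> (\<lambda>_. 1)"
  shows "integral\<^sup>L M f = 0"
proof -
  obtain a where a: "chr a \<noteq> 1" using nt by auto
  have L: "f \<in> L2 M" and ae: "AE x in M. f (T a x) = chr a * f x"
    using e unfolding eigenfun_def by auto
  have fm: "f \<in> borel_measurable M" using L2_meas[OF L] .
  have "integral\<^sup>L M f = (\<integral>x. f (T a x) \<partial>M)" using mp_integral[OF MP fm] by simp
  also have "\<dots> = (\<integral>x. chr a * f x \<partial>M)"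
  proof (rule integral_cong_AE)
    show "(\<lambda>x. f (T a x)) \<in> borel_measurable M" using L2_meas[OF L2_shift[OF MP L]] .
    show "(\<lambda>x. chr a * f x) \<in> borel_measurable M" using fm by measurable
  qed (rule ae)
  also have "\<dots> = chr a * integral\<^sup>L M f" by simp
  finally have "(1 - chr a) * integral\<^sup>L M f = 0" by (simp add: algebra_simps)
  then show ?thesis using a by simp
qed

lemma eig_inv:
  assumes e: "eigenfun M T chr f" and c: "chr \<in> Rq q"
  shows "AE x in M. f (T (int q *s a) x) = f x"
proof -
  have "AE x in M. f (T (int q *s a) x) = chr (int q *s a) * f x"
    using e unfolding eigenfun_def by auto
  moreover have "chr (int q *s a) = 1"
    using c char_pow[of chr q a] unfolding Rq_def by auto
  ultimately show ?thesis by simp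
qed

lemma span_props:
  assumes s: "s \<in> eig_lin_span M T (Rq_star q)"
  shows "s \<in> L2 M" "integral\<^sup>L M s = 0" "AE x in M. s (T (int q *s a) x) = s x"
proof -
  obtain F where F: "finite F" "\<And>f. f \<in> F \<Longrightarrow> \<exists>chr\<in>Rq_star q. eigenfun M T chr f"
    and sd: "s = (\<lambda>x. \<Sum>f\<in>F. f x)"
    using s unfolding eig_lin_span_def by blast
  have FL: "f \<in> L2 M" if "f \<in> F" for f using F(2)[OF that] unfolding eigenfun_def by auto
  show "s \<in> L2 M" unfolding sd by (rule L2_sum[OF F(1) FL])
  have "integral\<^sup>L M s = (\<Sum>f\<in>F. integral\<^sup>L M f)"
    unfolding sd using Bochner_Integration.integral_sum[of F M "\<lambda>f x. f x"] L2_int[OF P FL] by simp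
  also have "\<dots> = 0"
  proof (rule sum.neutral, rule ballI)
    fix f assume "f \<in> F"
    then obtain chr where "chr \<in> Rq_star q" "eigenfun M T chr f" using F(2) by blast
    then show "integral\<^sup>L M f = 0" using eig_int_zero unfolding Rq_star_def by auto
  qed
  finally show "integral\<^sup>L M s = 0" .
  have "AE x in M. \<forall>f\<in>F. f (T (int q *s a) x) = f x"
  proof (rule AE_finite_allI[OF F(1)])
    fix f assume "f \<in> F"
    then obtain chr where "chr \<in> Rq_star q" "eigenfun M T chr f" using F(2) by blast
    then show "AE x in M. f (T (int q *s a) x) = f x" using eig_inv unfolding Rq_star_def by auto
  qed
  then show "AE x in M. s (T (int q *s a) x) = s x"
    unfolding sd by (auto intro: sum.cong)
qed

lemma L1_le_L2:
  assumes u: "u \<in> L2 M"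
  shows "(\<integral>x. cmod (u x) \<partial>M) \<le> L2_norm M u"
proof -
  define m where "m = (\<integral>x. cmod (u x) \<partial>M)"
  have iu: "integrable M (\<lambda>x. cmod (u x))" using L2_int[OF P u] by simp
  have i2: "integrable M (\<lambda>x. (cmod (u x))\<^sup>2)" using L2_sq_int[OF u] .
  have ic: "integrable M (\<lambda>x. c)" for c :: real using prob_space.finite_measure[OF P] finite_measure.integrable_const by blast
  have one: "measure M (space M) = 1" using prob_space.prob_space[OF P] .
  have "0 \<le> (\<integral>x. (cmod (u x) - m)\<^sup>2 \<partial>M)" by simp
  also have "(\<integral>x. (cmod (u x) - m)\<^sup>2 \<partial>M) = (\<integral>x. (cmod (u x))\<^sup>2 - 2 * m * cmod (u x) + m\<^sup>2 \<partial>M)"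
    by (simp add: power2_diff algebra_simps)
  also have "\<dots> = (\<integral>x. (cmod (u x))\<^sup>2 \<partial>M) - 2 * m * m + m\<^sup>2"
    using iu i2 ic one by (simp add: m_def)
  finally have "m\<^sup>2 \<le> (\<integral>x. (cmod (u x))\<^sup>2 \<partial>M)" by (simp add: power2_eq_square)
  then have "m \<le> sqrt (\<integral>x. (cmod (u x))\<^sup>2 \<partial>M)" by (rule real_le_rsqrt)
  then show ?thesis by (simp add: m_def L2_norm_def)
qed

end

context
  fixes M :: "'a measure" and T :: "int^'d \<Rightarrow> 'a \<Rightarrow> 'a" and q :: nat
  assumes P: "prob_space M" and MP: "mp_action M T"
begin

lemma L2_norm_lt:
  assumes "L2_norm M u < e"
  shows "(\<integral>x. (cmod (u x))\<^sup>2 \<partial>M) < e\<^sup>2"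
proof -
  let ?I = "(\<integral>x. (cmod (u x))\<^sup>2 \<partial>M)"
  have "0 \<le> ?I" by simp
  then have "?I = (sqrt ?I)\<^sup>2" by simp
  also have "\<dots> < e\<^sup>2" using assms unfolding L2_norm_def
    by (intro power_strict_mono) auto
  finally show ?thesis .
qed

lemma Eig_int_zero:
  assumes h: "h \<in> Eig M T (Rq_star q)"
  shows "integral\<^sup>L M h = 0"
proof (rule ccontr)
  assume ne: "integral\<^sup>L M h \<noteq> 0"
  have hL: "h \<in> L2 M" using h unfolding Eig_def by auto
  obtain s where s: "s \<in> eig_lin_span M T (Rq_star q)" and
    lt: "L2_norm M (\<lambda>x. h x - s x) < cmod (integral\<^sup>L M h)"
  proof -
    have "cmod (integral\<^sup>L M h) > 0" using ne by simp
    then show ?thesis using h that unfolding Eig_def by blast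
  qed
  have sL: "s \<in> L2 M" and s0: "integral\<^sup>L M s = 0" using span_props[OF P MP s] by auto
  have dL: "(\<lambda>x. h x - s x) \<in> L2 M" using L2_diff[OF hL sL] .
  have "integral\<^sup>L M h = (\<integral>x. h x - s x \<partial>M)"
    using L2_int[OF P hL] L2_int[OF P sL] s0 by simp
  then have "cmod (integral\<^sup>L M h) \<le> (\<integral>x. cmod (h x - s x) \<partial>M)"
    using integral_norm_bound by metis
  also have "\<dots> \<le> L2_norm M (\<lambda>x. h x - s x)" using L1_le_L2[OF P MP dL] .
  finally show False using lt by simp
qed

lemma Eig_inv:
  assumes h: "h \<in> Eig M T (Rq_star q)"
  shows "AE x in M. h (T (int q *s a) x) = h x"
proof -
  let ?b = "int q *s a"
  have hL: "h \<in> L2 M" using h unfolding Eig_def by auto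
  define v where "v x = h (T ?b x) - h x" for x
  have vL: "v \<in> L2 M" unfolding v_def using L2_diff[OF L2_shift[OF MP hL] hL] .
  let ?I = "(\<integral>x. (cmod (v x))\<^sup>2 \<partial>M)"
  have I0: "0 \<le> ?I" by simp
  have bound: "?I < 4 * e\<^sup>2" if e: "e > 0" for e
  proof -
    obtain s where s: "s \<in> eig_lin_span M T (Rq_star q)" and
      lt: "L2_norm M (\<lambda>x. h x - s x) < e"
      using h e unfolding Eig_def by auto
    have sL: "s \<in> L2 M" and sinv: "AE x in M. s (T ?b x) = s x" using span_props[OF P MP s] by auto
    define w where "w x = h x - s x" for x
    have wL: "w \<in> L2 M" unfolding w_def using L2_diff[OF hL sL] .
    have wT: "(\<lambda>x. w (T ?b x)) \<in> L2 M" using L2_shift[OF MP wL] .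
    have w2: "(\<integral>x. (cmod (w x))\<^sup>2 \<partial>M) < e\<^sup>2" using L2_norm_lt lt unfolding w_def by simp
    have w2T: "(\<integral>x. (cmod (w (T ?b x)))\<^sup>2 \<partial>M) = (\<integral>x. (cmod (w x))\<^sup>2 \<partial>M)"
      using mp_integral[OF MP, of "\<lambda>x. (cmod (w x))\<^sup>2"] L2_meas[OF wL] by simp
    have "?I \<le> (\<integral>x. 2 * (cmod (w (T ?b x)))\<^sup>2 + 2 * (cmod (- w x))\<^sup>2 \<partial>M)"
    proof (rule integral_mono_AE)
      show "integrable M (\<lambda>x. (cmod (v x))\<^sup>2)" using L2_sq_int[OF vL] .
      show "integrable M (\<lambda>x. 2 * (cmod (w (T ?b x)))\<^sup>2 + 2 * (cmod (- w x))\<^sup>2)"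
        using L2_sq_int[OF wT] L2_sq_int[OF wL] by simp
      show "AE x in M. (cmod (v x))\<^sup>2 \<le> 2 * (cmod (w (T ?b x)))\<^sup>2 + 2 * (cmod (- w x))\<^sup>2"
        using sinv
      proof eventually_elim
        case (elim x)
        then have "v x = w (T ?b x) + (- w x)" unfolding v_def w_def by simp
        then show ?case using X2[of "w (T ?b x)" "- w x"] by simp
      qed
    qed
    also have "\<dots> = 4 * (\<integral>x. (cmod (w x))\<^sup>2 \<partial>M)"
      using L2_sq_int[OF wT] L2_sq_int[OF wL] w2T by simp
    also have "\<dots> < 4 * e\<^sup>2" using w2 by simp
    finally show ?thesis .
  qed
  have "?I = 0"
  proof (rule ccontr)
    assume ne: "?I \<noteq> 0"
    have pos: "?I > 0" using I0 ne by linarith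
    have "?I < 4 * (sqrt ?I / 4)\<^sup>2" using bound[of "sqrt ?I / 4"] pos by simp
    also have "\<dots> = ?I / 4" using I0 by (simp add: power_divide)
    finally show False using pos by simp
  qed
  then have "AE x in M. (cmod (v x))\<^sup>2 = 0"
    using integral_nonneg_eq_0_iff_AE[OF L2_sq_int[OF vL]] by simp
  then show ?thesis by eventually_elim (simp add: v_def)
qed

end

lemma erg_const_real:
  fixes M :: "'a measure" and T :: "int^'d \<Rightarrow> 'a \<Rightarrow> 'a" and u :: "'a \<Rightarrow> real"
  assumes P: "prob_space M" and ERG: "ergodic_action M T"
    and um[measurable]: "u \<in> borel_measurable M" and ui: "integrable M u"
    and inv: "\<And>a. AE x in M. u (T a x) = u x"
  shows "AE x in M. u x = integral\<^sup>L M u"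
proof -
  interpret prob_space M by (rule P)
  have MP: "mp_action M T" using ERG unfolding ergodic_action_def by auto
  have Tm[measurable]: "T a \<in> M \<rightarrow>\<^sub>M M" for a using mp_meas[OF MP] .
  define m where "m = integral\<^sup>L M u"
  define A where "A = {x\<in>space M. \<forall>a. m < u (T a x)}"
  have Am: "A \<in> sets M" unfolding A_def by measurable
  have Ainv: "T b -` A \<inter> space M = A" for b
  proof (intro set_eqI iffI)
    fix x assume x: "x \<in> T b -` A \<inter> space M"
    then have xs: "x \<in> space M" by auto
    have "m < u (T a x)" for a
    proof -
      have "m < u (T (a - b) (T b x))" using x unfolding A_def by auto
      also have "T (a - b) (T b x) = T a x" using mp_Tadd[OF MP xs, of "a - b" b] by simp
      finally show ?thesis .
    qed
    then show "x \<in> A" unfolding A_def using xs by auto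
  next
    fix x assume x: "x \<in> A"
    then have xs: "x \<in> space M" unfolding A_def by auto
    have "m < u (T a (T b x))" for a
    proof -
      have "m < u (T (a + b) x)" using x unfolding A_def by blast
      then show ?thesis using mp_Tadd[OF MP xs, of a b] by simp
    qed
    then show "x \<in> T b -` A \<inter> space M" unfolding A_def using xs mp_space[OF MP xs] by auto
  qed
  have "measure M A = 0 \<or> measure M A = 1"
    using ERG Am Ainv unfolding ergodic_action_def by blast
  moreover have aeA: "AE x in M. (x \<in> A) = (m < u x)"
  proof -
    have "AE x in M. \<forall>a. u (T a x) = u x" unfolding AE_all_countable using inv by blast
    from this AE_space show ?thesis
    proof eventually_elim
      case (elim x)
      show ?case unfolding A_def using elim by auto
    qed
  qed
  have im: "integrable M (\<lambda>x. u x - m)" using ui by simp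
  have int0: "(\<integral>x. u x - m \<partial>M) = 0" using ui prob_space by (simp add: m_def)
  moreover
  { assume "measure M A = 1"
    then have "AE x in M. x \<in> A" by (rule AE_prob_1)
    then have pos: "AE x in M. m < u x" using aeA by eventually_elim simp
    have nn: "AE x in M. 0 \<le> u x - m" using pos by eventually_elim simp
    have "AE x in M. u x - m = 0"
      using integral_nonneg_eq_0_iff_AE[OF im nn] int0 by simp
    with pos have "AE x in M. False" by eventually_elim simp
    then have False by (simp add: AE_False) }
  moreover
  { assume "measure M A = 0"
    then have "prob (space M - A) = 1" using prob_compl[OF Am] by simp
    then have "AE x in M. x \<in> space M - A" by (rule AE_prob_1)
    then have le: "AE x in M. u x \<le> m" using aeA by eventually_elim auto
    have im2: "integrable M (\<lambda>x. m - u x)" using ui by simp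
    have "(\<integral>x. m - u x \<partial>M) = 0" using ui prob_space by (simp add: m_def)
    moreover have nn: "AE x in M. 0 \<le> m - u x" using le by eventually_elim simp
    ultimately have "AE x in M. m - u x = 0"
      using integral_nonneg_eq_0_iff_AE[OF im2 nn] by simp
    then have "AE x in M. u x = m" by eventually_elim simp }
  ultimately show ?thesis unfolding m_def by blast
qed

lemma erg_const:
  fixes M :: "'a measure" and T :: "int^'d \<Rightarrow> 'a \<Rightarrow> 'a" and g :: "'a \<Rightarrow> complex"
  assumes P: "prob_space M" and ERG: "ergodic_action M T"
    and gL: "g \<in> L2 M"
    and inv: "\<And>a. AE x in M. g (T a x) = g x"
  shows "\<exists>c. AE x in M. g x = c"
proof -
  have gm[measurable]: "g \<in> borel_measurable M" using L2_meas[OF gL] .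
  have gi: "integrable M g" using L2_int[OF P gL] .
  have invR: "AE x in M. Re (g (T a x)) = Re (g x)" for a using inv[of a] by eventually_elim simp
  have invI: "AE x in M. Im (g (T a x)) = Im (g x)" for a using inv[of a] by eventually_elim simp
  have r: "AE x in M. Re (g x) = integral\<^sup>L M (\<lambda>x. Re (g x))"
    by (rule erg_const_real[OF P ERG]) (use gi invR in auto)
  have i: "AE x in M. Im (g x) = integral\<^sup>L M (\<lambda>x. Im (g x))"
    by (rule erg_const_real[OF P ERG]) (use gi invI in auto)
  from r i have "AE x in M. g x = Complex (integral\<^sup>L M (\<lambda>x. Re (g x))) (integral\<^sup>L M (\<lambda>x. Im (g x)))"
    by eventually_elim (simp add: complex_eq_iff)
  then show ?thesis by blast
qed


definition dotv :: "int^'d \<Rightarrow> int^'d \<Rightarrow> int" where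
  "dotv k a = (\<Sum>i\<in>UNIV. k$i * a$i)"

definition Eq :: "nat \<Rightarrow> int \<Rightarrow> complex" where
  "Eq q m = cis (2 * pi * of_int m / of_nat q)"

definition Kset :: "nat \<Rightarrow> (int^'d) set" where
  "Kset q = {k. \<forall>i. 0 \<le> k$i \<and> k$i < int q}"

definition rho :: "nat \<Rightarrow> int^'d \<Rightarrow> int^'d \<Rightarrow> int^'d" where
  "rho q a b = (\<chi> i. (b$i + a$i) mod int q)"

definition mq :: "nat \<Rightarrow> int^'d \<Rightarrow> int^'d \<Rightarrow> int^'d" where
  "mq q a b = (\<chi> i. (b$i + a$i) div int q)"

lemma dotv_add2: "dotv k (a + b) = dotv k a + dotv k b"
  by (simp add: dotv_def algebra_simps sum.distrib)
lemma dotv_add1: "dotv (a + b) k = dotv a k + dotv b k"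
  by (simp add: dotv_def algebra_simps sum.distrib)
lemma dotv_smult2: "dotv k (c *s a) = c * dotv k a"
  by (simp add: dotv_def sum_distrib_left algebra_simps)
lemma dotv_smult1: "dotv (c *s a) k = c * dotv a k"
  by (simp add: dotv_def sum_distrib_left algebra_simps)
lemma dotv_zero2[simp]: "dotv k 0 = 0"
  by (simp add: dotv_def)
lemma dotv_zero1[simp]: "dotv 0 k = 0"
  by (simp add: dotv_def)
lemma dotv_axis2: "dotv k (axis j 1) = k$j"
proof -
  have "dotv k (axis j 1) = (\<Sum>i\<in>UNIV. if i = j then k$j else 0)"
    unfolding dotv_def axis_def by (intro sum.cong) auto
  then show ?thesis by simp
qed
lemma dotv_axis1: "dotv (axis j 1) k = k$j"
proof -
  have "dotv (axis j 1) k = (\<Sum>i\<in>UNIV. if i = j then k$j else 0)"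
    unfolding dotv_def axis_def by (intro sum.cong) auto
  then show ?thesis by simp
qed

lemma Eq_add: "Eq q (m + n) = Eq q m * Eq q n"
  unfolding Eq_def cis_mult by (simp add: add_divide_distrib distrib_left)

lemma Eq_mult_q: "q > 0 \<Longrightarrow> Eq q (int q * n) = 1"
proof -
  assume q: "q > 0"
  have "2 * pi * of_int (int q * n) / of_nat q = 2 * pi * of_int n" using q by simp
  then show ?thesis unfolding Eq_def by simp
qed

lemma Eq_norm[simp]: "cmod (Eq q m) = 1"
  by (simp add: Eq_def)

lemma Eq_pow: "q > 0 \<Longrightarrow> Eq q m ^ q = 1"
proof -
  assume q: "q > 0"
  have "Eq q m ^ q = cis (real q * (2 * pi * of_int m / of_nat q))"
    unfolding Eq_def by (rule Complex.DeMoivre)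
  also have "real q * (2 * pi * of_int m / of_nat q) = 2 * pi * of_int m" using q by simp
  finally show ?thesis by simp
qed

lemma Eq_zero[simp]: "Eq q 0 = 1"
  by (simp add: Eq_def)

lemma Eq_one_dvd:
  assumes q: "q > 0" and e: "Eq q m = 1" shows "int q dvd m"
proof -
  have "cos (2 * pi * of_int m / of_nat q) = 1"
    using e unfolding Eq_def by (metis cis.sel(1) one_complex.sel(1))
  then obtain n :: int where n: "2 * pi * of_int m / of_nat q = of_int n * 2 * pi"
    using cos_one_2pi_int by blast
  then have "of_int m = of_int n * (of_nat q :: real)" using q
    by (simp add: field_simps)
  then have "m = n * int q" by (metis of_int_eq_iff of_int_mult of_int_of_nat_eq)
  then show ?thesis by simp
qed

lemma Eq_ne1: "q > 0 \<Longrightarrow> 0 < m \<Longrightarrow> m < int q \<Longrightarrow> Eq q m \<noteq> 1"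
  using Eq_one_dvd zdvd_not_zless by blast

lemma Eq_ne1': "q > 0 \<Longrightarrow> 0 < m \<Longrightarrow> m < int q \<Longrightarrow> Eq q (- m) \<noteq> 1"
  using Eq_one_dvd zdvd_not_zless by (metis dvd_minus_iff)


lemma finite_Kset: "finite (Kset q :: (int^'d) set)"
proof -
  have "Kset q \<subseteq> vec_lambda ` (PiE (UNIV :: 'd set) (\<lambda>_. {0..<int q}))"
  proof
    fix k :: "int^'d" assume "k \<in> Kset q"
    then have "(\<lambda>i. k$i) \<in> PiE UNIV (\<lambda>_. {0..<int q})" unfolding Kset_def by auto
    then show "k \<in> vec_lambda ` (PiE (UNIV :: 'd set) (\<lambda>_. {0..<int q}))"
      by (metis image_eqI vec_lambda_eta)
  qed
  moreover have "finite (PiE (UNIV :: 'd set) (\<lambda>_. {0..<int q}))" by (intro finite_PiE) auto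
  then have "finite (vec_lambda ` (PiE (UNIV :: 'd set) (\<lambda>_. {0..<int q})))" by (rule finite_imageI)
  ultimately show ?thesis by (rule finite_subset)
qed

lemma zero_Kset: "q > 0 \<Longrightarrow> 0 \<in> Kset q"
  by (simp add: Kset_def)

lemma rho_Kset: "q > 0 \<Longrightarrow> rho q a b \<in> Kset q"
  by (simp add: rho_def Kset_def)

lemma rho_inv: "q > 0 \<Longrightarrow> b \<in> Kset q \<Longrightarrow> rho q (- a) (rho q a b) = b"
  unfolding rho_def Kset_def
  by (simp add: vec_eq_iff mod_diff_left_eq)

lemma rho_bij: "q > 0 \<Longrightarrow> bij_betw (rho q a) (Kset q) (Kset q)"
proof (rule bij_betwI[where g="rho q (- a)"])
  assume q: "q > 0"
  show "rho q a \<in> Kset q \<rightarrow> Kset q" "rho q (- a) \<in> Kset q \<rightarrow> Kset q" using rho_Kset[OF q] by auto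
  show "rho q (- a) (rho q a x) = x" if "x \<in> Kset q" for x using rho_inv[OF q that] .
  show "rho q a (rho q (- a) y) = y" if "y \<in> Kset q" for y using rho_inv[OF q that, of "- a"] by simp
qed

lemma rho_decomp: "b + a = rho q a b + int q *s mq q a b"
  by (simp add: rho_def mq_def vec_eq_iff)


lemma ortho:
  fixes b :: "int^'d"
  assumes q: "q > 0" and b: "b \<in> Kset q" "b \<noteq> 0"
  shows "(\<Sum>k\<in>Kset q. Eq q (- dotv k b)) = 0"
proof -
  obtain j where j: "b$j \<noteq> 0" using b(2) by (auto simp: vec_eq_iff)
  have bj: "0 < b$j" "b$j < int q" using b(1) j unfolding Kset_def by (auto simp: order_le_less)
  let ?e = "axis j 1 :: int^'d"
  let ?S = "(\<Sum>k\<in>Kset q. Eq q (- dotv k b))"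
  have "?S = (\<Sum>k\<in>Kset q. Eq q (- dotv (rho q ?e k) b))"
    using sum.reindex_bij_betw[OF rho_bij[OF q, of ?e], of "\<lambda>k. Eq q (- dotv k b)"] by simp
  also have "\<dots> = (\<Sum>k\<in>Kset q. Eq q (- b$j) * Eq q (- dotv k b))"
  proof (rule sum.cong[OF refl])
    fix k :: "int^'d"
    have "k + ?e = rho q ?e k + int q *s mq q ?e k" by (rule rho_decomp)
    then have "dotv (k + ?e) b = dotv (rho q ?e k) b + int q * dotv (mq q ?e k) b"
      by (simp add: dotv_add1 dotv_smult1)
    then have eq: "- dotv (rho q ?e k) b = (- b$j + - dotv k b) + int q * dotv (mq q ?e k) b"
      by (simp add: dotv_add1 dotv_axis1)
    show "Eq q (- dotv (rho q ?e k) b) = Eq q (- b$j) * Eq q (- dotv k b)"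
      unfolding eq Eq_add Eq_mult_q[OF q] by simp
  qed
  also have "\<dots> = Eq q (- b$j) * ?S" by (simp add: sum_distrib_left)
  finally have "(1 - Eq q (- b$j)) * ?S = 0" by (simp add: algebra_simps)
  moreover have "Eq q (- b$j) \<noteq> 1" using Eq_ne1'[OF q bj] .
  ultimately show ?thesis by simp
qed

lemma chi_Rq:
  assumes q: "q > 0"
  shows "(\<lambda>a. Eq q (dotv k a)) \<in> Rq q"
  unfolding Rq_def character_def
  by (auto simp: dotv_add2 Eq_add Eq_pow[OF q])

lemma chi_Rq_star:
  fixes k :: "int^'d"
  assumes q: "q > 0" and k: "k \<in> Kset q" "k \<noteq> 0"
  shows "(\<lambda>a. Eq q (dotv k a)) \<in> Rq_star q"
proof -
  obtain j where j: "k$j \<noteq> 0" using k(2) by (auto simp: vec_eq_iff)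
  have kj: "0 < k$j" "k$j < int q" using k(1) j unfolding Kset_def by (auto simp: order_le_less)
  have "Eq q (dotv k (axis j 1)) \<noteq> 1" using Eq_ne1[OF q kj] by (simp add: dotv_axis2)
  then have "(\<lambda>a. Eq q (dotv k a)) \<noteq> (\<lambda>_. 1)"
    by (metis (mono_tags, lifting))
  then show ?thesis using chi_Rq[OF q] unfolding Rq_star_def by auto
qed


definition gk :: "(int^'d \<Rightarrow> 'a \<Rightarrow> 'a) \<Rightarrow> nat \<Rightarrow> ('a \<Rightarrow> complex) \<Rightarrow> int^'d \<Rightarrow> 'a \<Rightarrow> complex" where
  "gk T q g k x = (1 / of_nat (card (Kset q :: (int^'d) set))) * (\<Sum>b\<in>Kset q. Eq q (- dotv k b) * g (T b x))"

lemma eig_in_Eig: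
  assumes "eigenfun M T chr f" "chr \<in> R"
  shows "f \<in> Eig M T R"
proof -
  have fL: "f \<in> L2 M" using assms unfolding eigenfun_def by auto
  have sp: "f \<in> eig_lin_span M T R"
    unfolding eig_lin_span_def
    by (rule CollectI, rule exI[of _ "{f}"]) (use assms in auto)
  have "L2_norm M (\<lambda>x. f x - f x) = 0" by (simp add: L2_norm_def)
  then show ?thesis unfolding Eig_def using fL sp by force
qed

context
  fixes M :: "'a measure" and T :: "int^'d \<Rightarrow> 'a \<Rightarrow> 'a" and q :: nat
  assumes P: "prob_space M" and MP: "mp_action M T" and q: "q > 0"
begin

lemma gk_L2: "g \<in> L2 M \<Longrightarrow> gk T q g k \<in> L2 M"
  unfolding gk_def
  by (intro L2_cmult L2_sum finite_Kset L2_shift[OF MP]) auto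

lemma card_Kset_pos: "card (Kset q :: (int^'d) set) > 0"
  using finite_Kset zero_Kset[OF q] card_gt_0_iff by blast

lemma gk_sum:
  assumes x: "x \<in> space M"
  shows "(\<Sum>k\<in>Kset q. gk T q g k x) = g x"
proof -
  let ?K = "Kset q :: (int^'d) set"
  let ?N = "of_nat (card ?K) :: complex"
  have "(\<Sum>k\<in>?K. gk T q g k x) = (1 / ?N) * (\<Sum>k\<in>?K. \<Sum>b\<in>?K. Eq q (- dotv k b) * g (T b x))"
    unfolding gk_def by (simp add: sum_distrib_left)
  also have "(\<Sum>k\<in>?K. \<Sum>b\<in>?K. Eq q (- dotv k b) * g (T b x)) = (\<Sum>b\<in>?K. (\<Sum>k\<in>?K. Eq q (- dotv k b)) * g (T b x))"
    by (subst sum.swap) (simp add: sum_distrib_right)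
  also have "\<dots> = (\<Sum>b\<in>?K. if b = 0 then ?N * g (T 0 x) else 0)"
  proof (rule sum.cong[OF refl])
    fix b assume b: "b \<in> ?K"
    show "(\<Sum>k\<in>?K. Eq q (- dotv k b)) * g (T b x) = (if b = 0 then ?N * g (T 0 x) else 0)"
    proof (cases "b = 0")
      case True then show ?thesis by simp
    next
      case False then show ?thesis using ortho[OF q b False] by simp
    qed
  qed
  also have "\<dots> = ?N * g (T 0 x)" by (subst sum.delta) (auto simp: finite_Kset zero_Kset[OF q])
  finally show ?thesis using card_Kset_pos mp_T0[OF MP x] by simp
qed

lemma gk_eigen:
  assumes gL: "g \<in> L2 M" and inv: "\<And>a. AE x in M. g (T (int q *s a) x) = g x"
  shows "eigenfun M T (\<lambda>a. Eq q (dotv k a)) (gk T q g k)"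
  unfolding eigenfun_def
proof (intro conjI allI gk_L2[OF gL])
  fix a
  let ?K = "Kset q :: (int^'d) set"
  let ?N = "of_nat (card ?K) :: complex"
  have "AE x in M. \<forall>b\<in>?K. g (T (int q *s mq q a b) (T (rho q a b) x)) = g (T (rho q a b) x)"
  proof (rule AE_finite_allI[OF finite_Kset])
    fix b :: "int^'d"
    show "AE x in M. g (T (int q *s mq q a b) (T (rho q a b) x)) = g (T (rho q a b) x)"
      by (rule mp_AE[OF MP inv[of "mq q a b"], of "rho q a b"])
  qed
  from this AE_space show "AE x in M. gk T q g k (T a x) = Eq q (dotv k a) * gk T q g k x"
  proof eventually_elim
    case (elim x)
    then have x: "x \<in> space M"
      and H: "\<And>b. b \<in> ?K \<Longrightarrow> g (T (int q *s mq q a b) (T (rho q a b) x)) = g (T (rho q a b) x)"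
      by auto
    have trm: "Eq q (- dotv k b) * g (T b (T a x)) =
        Eq q (dotv k a) * (Eq q (- dotv k (rho q a b)) * g (T (rho q a b) x))" if b: "b \<in> ?K" for b
    proof -
      have dec: "b + a = int q *s mq q a b + rho q a b" using rho_decomp[of b a q] by (simp add: add.commute)
      have "T b (T a x) = T (b + a) x" using mp_Tadd[OF MP x] by simp
      also have "\<dots> = T (int q *s mq q a b) (T (rho q a b) x)" unfolding dec using mp_Tadd[OF MP x] by simp
      finally have gT: "g (T b (T a x)) = g (T (rho q a b) x)" using H[OF b] by simp
      have "dotv k (b + a) = dotv k (int q *s mq q a b + rho q a b)" unfolding dec ..
      then have "dotv k b + dotv k a = int q * dotv k (mq q a b) + dotv k (rho q a b)"
        by (simp add: dotv_add2 dotv_smult2)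
      then have eq: "- dotv k b = (dotv k a + - dotv k (rho q a b)) + int q * (- dotv k (mq q a b))"
        by (simp add: algebra_simps)
      have "Eq q (- dotv k b) = Eq q (dotv k a) * Eq q (- dotv k (rho q a b))"
        unfolding eq Eq_add Eq_mult_q[OF q] by simp
      then show ?thesis using gT by simp
    qed
    have "gk T q g k (T a x) = (1 / ?N) * (\<Sum>b\<in>?K. Eq q (dotv k a) * (Eq q (- dotv k (rho q a b)) * g (T (rho q a b) x)))"
      unfolding gk_def using trm by (simp cong: sum.cong)
    also have "\<dots> = Eq q (dotv k a) * ((1 / ?N) * (\<Sum>b\<in>?K. Eq q (- dotv k (rho q a b)) * g (T (rho q a b) x)))"
      by (simp add: sum_distrib_left)
    also have "(\<Sum>b\<in>?K. Eq q (- dotv k (rho q a b)) * g (T (rho q a b) x)) = (\<Sum>b\<in>?K. Eq q (- dotv k b) * g (T b x))"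
      using sum.reindex_bij_betw[OF rho_bij[OF q, of a], of "\<lambda>b. Eq q (- dotv k b) * g (T b x)"] by simp
    finally show ?case unfolding gk_def by simp
  qed
qed

end

definition Af :: "(int^'d \<Rightarrow> 'a \<Rightarrow> 'a) \<Rightarrow> nat \<Rightarrow> 'a set \<Rightarrow> nat \<Rightarrow> 'a \<Rightarrow> real" where
  "Af T q B n x = real (card {a \<in> (box n :: (int^'d) set). T (int q *s a) x \<in> B}) / real (card (box n :: (int^'d) set))"

lemma finite_box: "finite (box n :: (int^'d) set)"
proof -
  have "box n \<subseteq> vec_lambda ` (PiE (UNIV :: 'd set) (\<lambda>_. {1..int n}))"
  proof
    fix k :: "int^'d" assume "k \<in> box n"
    then have "(\<lambda>i. k$i) \<in> PiE UNIV (\<lambda>_. {1..int n})" unfolding box_def by auto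
    then show "k \<in> vec_lambda ` (PiE (UNIV :: 'd set) (\<lambda>_. {1..int n}))"
      by (metis image_eqI vec_lambda_eta)
  qed
  moreover have "finite (PiE (UNIV :: 'd set) (\<lambda>_. {1..int n}))" by (intro finite_PiE) auto
  then have "finite (vec_lambda ` (PiE (UNIV :: 'd set) (\<lambda>_. {1..int n})))" by (rule finite_imageI)
  ultimately show ?thesis by (rule finite_subset)
qed

lemma card_box_pos: "n \<ge> 1 \<Longrightarrow> card (box n :: (int^'d) set) > 0"
proof -
  assume n: "n \<ge> 1"
  have "(\<chi> i. 1) \<in> (box n :: (int^'d) set)" using n unfolding box_def by auto
  then show ?thesis using finite_box card_gt_0_iff by blast
qed

lemma Af_sum:
  fixes T :: "int^'d \<Rightarrow> 'a \<Rightarrow> 'a"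
  shows "Af T q B n x = (\<Sum>a\<in>(box n :: (int^'d) set). indicator B (T (int q *s a) x)) / real (card (box n :: (int^'d) set))"
proof -
  have "real (card {a \<in> (box n :: (int^'d) set). T (int q *s a) x \<in> B}) = (\<Sum>a\<in>{a \<in> (box n :: (int^'d) set). T (int q *s a) x \<in> B}. 1)"
    by (rule real_of_card)
  also have "\<dots> = (\<Sum>a\<in>(box n :: (int^'d) set). if T (int q *s a) x \<in> B then 1 else 0)"
    by (rule sum.inter_filter[OF finite_box])
  also have "\<dots> = (\<Sum>a\<in>(box n :: (int^'d) set). indicator B (T (int q *s a) x))"
    by (intro sum.cong) (auto simp: indicator_def)
  finally show ?thesis unfolding Af_def by simp
qed

lemma Af_bounds:
  fixes T :: "int^'d \<Rightarrow> 'a \<Rightarrow> 'a"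
  shows "0 \<le> Af T q B n x" "Af T q B n x \<le> 1"
proof -
  show "0 \<le> Af T q B n x" unfolding Af_def by simp
  have "card {a \<in> (box n :: (int^'d) set). T (int q *s a) x \<in> B} \<le> card (box n :: (int^'d) set)"
    by (rule card_mono[OF finite_box]) auto
  then show "Af T q B n x \<le> 1" unfolding Af_def
    by (cases "card (box n :: (int^'d) set) = 0") (auto simp: divide_le_eq_1)
qed

context
  fixes M :: "'a measure" and T :: "int^'d \<Rightarrow> 'a \<Rightarrow> 'a" and q :: nat and B :: "'a set"
  assumes P: "prob_space M" and MP: "mp_action M T" and Bm[measurable]: "B \<in> sets M"
begin

lemma Tm[measurable]: "T a \<in> M \<rightarrow>\<^sub>M M" using mp_meas[OF MP] .

lemma Af_meas[measurable]: "(\<lambda>x. Af T q B n x) \<in> borel_measurable M"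
  unfolding Af_sum by measurable

lemma Af_int: "n \<ge> 1 \<Longrightarrow> (\<integral>x. Af T q B n x \<partial>M) = measure M B"
proof -
  assume n: "n \<ge> 1"
  let ?S = "box n :: (int^'d) set"
  have ind: "integrable M (\<lambda>x. indicator B x :: real)"
    using finite_measure.emeasure_finite[OF prob_space.finite_measure[OF P], of B]
    by (simp add: integrable_indicator_iff less_top)
  have each: "(\<integral>x. indicator B (T (int q *s a) x) \<partial>M) = measure M B" for a
    using mp_integral[OF MP, of "\<lambda>x. indicator B x :: real"] by simp
  have "(\<integral>x. Af T q B n x \<partial>M) = (\<integral>x. (\<Sum>a\<in>?S. indicator B (T (int q *s a) x)) \<partial>M) / real (card ?S)"
    unfolding Af_sum by simp
  also have "(\<integral>x. (\<Sum>a\<in>?S. indicator B (T (int q *s a) x)) \<partial>M) = (\<Sum>a\<in>?S. measure M B)"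
    using Bochner_Integration.integral_sum[of ?S M "\<lambda>a x. indicator B (T (int q *s a) x) :: real"]
      mp_integrable[OF MP _ ind] each by simp
  also have "\<dots> / real (card ?S) = measure M B" using card_box_pos[OF n, where 'd='d] by simp
  finally show ?thesis .
qed

end

lemma amgm:
  fixes L c t y :: real
  assumes L0: "0 \<le> L" and Lc: "L \<le> c" and t: "0 < t"
  shows "L * y \<le> t / 2 * L + c / (2 * t) * y\<^sup>2"
proof -
  have sq: "2 * t * y \<le> t\<^sup>2 + y\<^sup>2" using sum_squares_bound[of t y] by (simp add: power2_eq_square)
  have a: "L * (2 * t * y) \<le> L * (t\<^sup>2 + y\<^sup>2)" using mult_left_mono[OF sq L0] .
  have b: "L * y\<^sup>2 \<le> c * y\<^sup>2" using mult_right_mono[OF Lc] by simp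
  have "2 * t * (L * y) \<le> 2 * t * (t / 2 * L + c / (2 * t) * y\<^sup>2)"
  proof -
    have "2 * t * (t / 2 * L + c / (2 * t) * y\<^sup>2) = L * t\<^sup>2 + c * y\<^sup>2"
      using t by (simp add: field_simps power2_eq_square)
    then show ?thesis using a b by (simp add: algebra_simps)
  qed
  then show ?thesis using t by simp
qed

lemma final_ineq:
  fixes P m d :: real
  assumes m: "0 \<le> m" and d: "0 \<le> 1 + d"
    and H: "\<And>t. t > 0 \<Longrightarrow> P \<le> t / 2 * m + (1 + d) * m / (2 * t) * P"
  shows "P \<le> (1 + d) * m\<^sup>2"
proof (cases "P \<le> 0")
  case True
  then show ?thesis using m d by (meson order_trans mult_nonneg_nonneg zero_le_power2)
next
  case False
  then have P: "P > 0" by simp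
  show ?thesis
  proof (cases "m = 0")
    case True
    then show ?thesis using H[of 1] P by simp
  next
    case False
    then have mp: "m > 0" using m by simp
    have "P \<le> (P / m) / 2 * m + (1 + d) * m / (2 * (P / m)) * P" using H[of "P / m"] P mp by simp
    also have "\<dots> = P / 2 + (1 + d) * m\<^sup>2 / 2" using P mp by (simp add: field_simps power2_eq_square)
    finally show ?thesis by simp
  qed
qed

lemma ofr_ind: "(complex_of_real (indicator B y)) = indicator B y"
  by (simp add: indicator_def)

lemma norm_bound:
  fixes M :: "'a measure" and T :: "int^'d \<Rightarrow> 'a \<Rightarrow> 'a" and q :: nat and B :: "'a set"
    and p :: "'a \<Rightarrow> complex" and \<delta> :: real
  assumes P: "prob_space M" and MP: "mp_action M T" and Bm[measurable]: "B \<in> sets M"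
    and eqd: "equidistributed M T q \<delta> B" and d: "\<delta> > 0"
    and pI: "p \<in> inv_funs M T q"
    and orth: "L2_inner M (\<lambda>x. indicator B x - p x) p = 0"
  shows "(\<integral>x. (cmod (p x))\<^sup>2 \<partial>M) \<le> (1 + \<delta>) * (measure M B)\<^sup>2"
proof -
  interpret prob_space M by (rule P)
  have Tm[measurable]: "T a \<in> M \<rightarrow>\<^sub>M M" for a using mp_meas[OF MP] .
  have pL: "p \<in> L2 M" and pinv: "\<And>a. AE x in M. p (T (int q *s a) x) = p x"
    using pI unfolding inv_funs_def by auto
  have pm[measurable]: "p \<in> borel_measurable M" using L2_meas[OF pL] .
  have Afm[measurable]: "(\<lambda>x. Af T q B n x) \<in> borel_measurable M" for n
    using Af_meas[OF P MP Bm] .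
  define \<mu> where "\<mu> = measure M B"
  define c where "c = (1 + \<delta>) * \<mu>"
  define Pc where "Pc = (\<integral>x. (cmod (p x))\<^sup>2 \<partial>M)"
  define L where "L x = lim (\<lambda>n. Af T q B n x)" for x
  have Lm[measurable]: "L \<in> borel_measurable M" unfolding L_def by (rule borel_measurable_lim_metric) (rule Afm)
  have conv: "AE x in M. (\<lambda>n. Af T q B n x) \<longlonglongrightarrow> L x \<and> L x \<le> c"
    using eqd unfolding equidistributed_def
  proof eventually_elim
    case (elim x)
    then obtain L' where L': "(\<lambda>n. Af T q B n x) \<longlonglongrightarrow> L'" "L' \<le> c"
      unfolding Af_def c_def \<mu>_def by blast
    have "L x = L'" unfolding L_def using L'(1) by (rule limI)
    then show ?case using L' by simp
  qed
  have Lb: "AE x in M. 0 \<le> L x \<and> L x \<le> 1"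
    using conv
  proof eventually_elim
    case (elim x)
    then have l: "(\<lambda>n. Af T q B n x) \<longlonglongrightarrow> L x" by simp
    have b0: "\<exists>N. \<forall>n\<ge>N. 0 \<le> Af T q B n x" using Af_bounds(1)[of T q B _ x] by blast
    have b1: "\<exists>N. \<forall>n\<ge>N. Af T q B n x \<le> 1" using Af_bounds(2)[of T q B _ x] by blast
    have "0 \<le> L x" by (rule LIMSEQ_le_const[OF l b0])
    moreover have "L x \<le> 1" by (rule LIMSEQ_le_const2[OF l b1])
    ultimately show ?case by simp
  qed
  have ic: "integrable M (\<lambda>x. 1 :: real)" by simp
  have "(\<lambda>n. \<integral>x. Af T q B n x \<partial>M) \<longlonglongrightarrow> (\<integral>x. L x \<partial>M)"
  proof (rule integral_dominated_convergence[where w="\<lambda>_. 1"])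
    show "AE x in M. (\<lambda>n. Af T q B n x) \<longlonglongrightarrow> L x" using conv by eventually_elim simp
    show "AE x in M. norm (Af T q B n x) \<le> 1" for n using Af_bounds[of T q B n] by simp
    show "L \<in> borel_measurable M" by (rule Lm)
    show "(\<lambda>x. Af T q B n x) \<in> borel_measurable M" for n by (rule Afm)
    show "integrable M (\<lambda>x. 1::real)" by (rule ic)
  qed
  then have "(\<lambda>n. \<integral>x. Af T q B (Suc n) x \<partial>M) \<longlonglongrightarrow> (\<integral>x. L x \<partial>M)"
    by (rule LIMSEQ_Suc)
  moreover have "(\<lambda>n. \<integral>x. Af T q B (Suc n) x \<partial>M) = (\<lambda>n. \<mu>)"
    using Af_int[OF P MP Bm, of "Suc _" q] by (simp add: \<mu>_def)
  ultimately have "(\<lambda>n. \<mu>) \<longlonglongrightarrow> (\<integral>x. L x \<partial>M)" by simp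
  then have Lint: "(\<integral>x. L x \<partial>M) = \<mu>" by (rule LIMSEQ_unique[OF _ tendsto_const])
  have Li: "integrable M L"
  proof (rule Bochner_Integration.integrable_bound[OF ic Lm])
    show "AE x in M. norm (L x) \<le> norm (1::real)" using Lb by eventually_elim auto
  qed
  have pi: "integrable M p" using L2_int[OF P pL] .
  have pni: "integrable M (\<lambda>x. cmod (p x))" using pi by simp
  have fL: "(indicator B :: 'a \<Rightarrow> complex) \<in> L2 M" using L2_indicator[OF P Bm] .
  define fp where "fp = (\<integral>x. indicator B x * cnj (p x) \<partial>M)"
  have Sn: "(\<integral>x. complex_of_real (Af T q B n x) * cnj (p x) \<partial>M) = fp" if n: "n \<ge> 1" for n
  proof -
    let ?S = "box n :: (int^'d) set"
    have eq: "complex_of_real (Af T q B n x) * cnj (p x) =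
        (\<Sum>a\<in>?S. indicator B (T (int q *s a) x) * cnj (p x)) / of_nat (card ?S)" for x
    proof -
      have "complex_of_real (Af T q B n x) = (\<Sum>a\<in>?S. indicator B (T (int q *s a) x)) / of_nat (card ?S)"
        unfolding Af_sum of_real_divide of_real_sum ofr_ind by simp
      then show ?thesis by (simp only: times_divide_eq_left sum_distrib_right)
    qed
    have ints: "integrable M (\<lambda>x. indicator B (T (int q *s a) x) * cnj (p x))" for a
      using L2_prod_int[OF L2_shift[OF MP fL] pL] by simp
    have m0: "(\<lambda>y. indicator B y * cnj (p y)) \<in> borel_measurable M"
      using L2_prod_int[OF fL pL] by (rule borel_measurable_integrable)
    have each: "(\<integral>x. indicator B (T (int q *s a) x) * cnj (p x) \<partial>M) = fp" for a
    proof -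
      have "(\<integral>x. indicator B (T (int q *s a) x) * cnj (p x) \<partial>M) =
          (\<integral>x. indicator B (T (int q *s a) x) * cnj (p (T (int q *s a) x)) \<partial>M)"
      proof (rule integral_cong_AE)
        show "(\<lambda>x. indicator B (T (int q *s a) x) * cnj (p x)) \<in> borel_measurable M"
          using ints[of a] by (rule borel_measurable_integrable)
        show "(\<lambda>x. indicator B (T (int q *s a) x) * cnj (p (T (int q *s a) x))) \<in> borel_measurable M"
          using measurable_compose[OF mp_meas[OF MP] m0] .
        show "AE x in M. indicator B (T (int q *s a) x) * cnj (p x) =
            indicator B (T (int q *s a) x) * cnj (p (T (int q *s a) x))"
          using pinv[of a] by eventually_elim simp
      qed
      also have "\<dots> = fp" unfolding fp_def
        by (rule mp_integral[OF MP m0])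
      finally show ?thesis .
    qed
    have "(\<integral>x. complex_of_real (Af T q B n x) * cnj (p x) \<partial>M) =
        (\<integral>x. (\<Sum>a\<in>?S. indicator B (T (int q *s a) x) * cnj (p x)) \<partial>M) / of_nat (card ?S)"
      unfolding eq by simp
    also have "(\<integral>x. (\<Sum>a\<in>?S. indicator B (T (int q *s a) x) * cnj (p x)) \<partial>M) = (\<Sum>a\<in>?S. fp)"
      using Bochner_Integration.integral_sum[of ?S M "\<lambda>a x. indicator B (T (int q *s a) x) * cnj (p x)"]
        ints each by simp
    also have "\<dots> / of_nat (card ?S) = fp" using card_box_pos[OF n, where 'd='d] by simp
    finally show ?thesis .
  qed
  have IL: "integrable M (\<lambda>x. complex_of_real (L x) * cnj (p x))"
  proof (rule Bochner_Integration.integrable_bound[OF pni])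
    show "(\<lambda>x. complex_of_real (L x) * cnj (p x)) \<in> borel_measurable M"
      by (rule borel_measurable_times[OF measurable_compose[OF Lm borel_measurable_of_real] cnj_meas[OF pm]])
    show "AE x in M. norm (complex_of_real (L x) * cnj (p x)) \<le> norm (cmod (p x))"
      using Lb
    proof eventually_elim
      case (elim x)
      have "norm (complex_of_real (L x) * cnj (p x)) = \<bar>L x\<bar> * cmod (p x)" by (simp add: norm_mult)
      also have "\<dots> \<le> cmod (p x)" using elim by (intro mult_left_le_one_le) auto
      finally show ?case by simp
    qed
  qed
  have "(\<lambda>n. \<integral>x. complex_of_real (Af T q B n x) * cnj (p x) \<partial>M) \<longlonglongrightarrow> (\<integral>x. complex_of_real (L x) * cnj (p x) \<partial>M)"
  proof (rule integral_dominated_convergence[where w="\<lambda>x. cmod (p x)"])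
    show "AE x in M. (\<lambda>n. complex_of_real (Af T q B n x) * cnj (p x)) \<longlonglongrightarrow> complex_of_real (L x) * cnj (p x)"
      using conv by eventually_elim (intro tendsto_mult tendsto_of_real tendsto_const, simp)
    show "AE x in M. norm (complex_of_real (Af T q B n x) * cnj (p x)) \<le> cmod (p x)" for n
    proof (rule AE_I2)
      fix x
      have "norm (complex_of_real (Af T q B n x) * cnj (p x)) = \<bar>Af T q B n x\<bar> * cmod (p x)" by (simp add: norm_mult)
      also have "\<dots> \<le> cmod (p x)" using Af_bounds[of T q B n x] by (intro mult_left_le_one_le) auto
      finally show "norm (complex_of_real (Af T q B n x) * cnj (p x)) \<le> cmod (p x)" .
    qed
    show "integrable M (\<lambda>x. cmod (p x))" by (rule pni)
    show "(\<lambda>x. complex_of_real (L x) * cnj (p x)) \<in> borel_measurable M" using IL by (rule borel_measurable_integrable)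
    show "(\<lambda>x. complex_of_real (Af T q B n x) * cnj (p x)) \<in> borel_measurable M" for n
      by (rule borel_measurable_times[OF measurable_compose[OF Afm borel_measurable_of_real] cnj_meas[OF pm]])
  qed
  then have "(\<lambda>n. \<integral>x. complex_of_real (Af T q B (Suc n) x) * cnj (p x) \<partial>M) \<longlonglongrightarrow> (\<integral>x. complex_of_real (L x) * cnj (p x) \<partial>M)"
    by (rule LIMSEQ_Suc)
  moreover have "(\<lambda>n. \<integral>x. complex_of_real (Af T q B (Suc n) x) * cnj (p x) \<partial>M) = (\<lambda>n. fp)"
    using Sn[of "Suc _"] by simp
  ultimately have "(\<lambda>n. fp) \<longlonglongrightarrow> (\<integral>x. complex_of_real (L x) * cnj (p x) \<partial>M)" by simp
  then have fpL: "fp = (\<integral>x. complex_of_real (L x) * cnj (p x) \<partial>M)" by (rule LIMSEQ_unique[OF tendsto_const])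
  have i1: "integrable M (\<lambda>x. indicator B x * cnj (p x))" using L2_prod_int[OF fL pL] .
  have i2: "integrable M (\<lambda>x. p x * cnj (p x))" using L2_prod_int[OF pL pL] .
  have "0 = (\<integral>x. indicator B x * cnj (p x) - p x * cnj (p x) \<partial>M)"
    using orth unfolding L2_inner_def by (simp add: left_diff_distrib)
  also have "\<dots> = fp - (\<integral>x. p x * cnj (p x) \<partial>M)" unfolding fp_def using i1 i2 by simp
  also have "(\<integral>x. p x * cnj (p x) \<partial>M) = (\<integral>x. complex_of_real ((cmod (p x))\<^sup>2) \<partial>M)"
    by (simp only: complex_norm_square)
  also have "\<dots> = complex_of_real Pc" unfolding Pc_def by (rule integral_complex_of_real)
  finally have fpP: "fp = complex_of_real Pc" by simp
  have "Pc = Re fp" using fpP by simp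
  also have "\<dots> = (\<integral>x. Re (complex_of_real (L x) * cnj (p x)) \<partial>M)"
    unfolding fpL using integral_Re[OF IL] by simp
  also have "\<dots> = (\<integral>x. L x * Re (p x) \<partial>M)" by simp
  also have "\<dots> \<le> (\<integral>x. L x * cmod (p x) \<partial>M)"
  proof (rule integral_mono_AE)
    show "integrable M (\<lambda>x. L x * Re (p x))" using integrable_Re[OF IL] by simp
    show "integrable M (\<lambda>x. L x * cmod (p x))"
    proof (rule Bochner_Integration.integrable_bound[OF pni])
      show "(\<lambda>x. L x * cmod (p x)) \<in> borel_measurable M"
        by (rule borel_measurable_times[OF Lm borel_measurable_integrable[OF pni]])
      show "AE x in M. norm (L x * cmod (p x)) \<le> norm (cmod (p x))"
        using Lb by eventually_elim (auto simp: abs_mult intro: mult_left_le_one_le)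
    qed
    show "AE x in M. L x * Re (p x) \<le> L x * cmod (p x)"
      using Lb by eventually_elim (auto intro: mult_left_mono complex_Re_le_cmod)
  qed
  finally have P1: "Pc \<le> (\<integral>x. L x * cmod (p x) \<partial>M)" .
  have P2: "Pc \<le> t / 2 * \<mu> + c / (2 * t) * Pc" if t: "t > 0" for t
  proof -
    have iLp: "integrable M (\<lambda>x. L x * cmod (p x))"
    proof (rule Bochner_Integration.integrable_bound[OF pni])
      show "(\<lambda>x. L x * cmod (p x)) \<in> borel_measurable M"
        by (rule borel_measurable_times[OF Lm borel_measurable_integrable[OF pni]])
      show "AE x in M. norm (L x * cmod (p x)) \<le> norm (cmod (p x))"
        using Lb by eventually_elim (auto simp: abs_mult intro: mult_left_le_one_le)
    qed
    have "(\<integral>x. L x * cmod (p x) \<partial>M) \<le> (\<integral>x. t / 2 * L x + c / (2 * t) * (cmod (p x))\<^sup>2 \<partial>M)"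
    proof (rule integral_mono_AE[OF iLp])
      show "integrable M (\<lambda>x. t / 2 * L x + c / (2 * t) * (cmod (p x))\<^sup>2)"
        using Li L2_sq_int[OF pL] by simp
      show "AE x in M. L x * cmod (p x) \<le> t / 2 * L x + c / (2 * t) * (cmod (p x))\<^sup>2"
        using Lb conv by eventually_elim (rule amgm, auto simp: t)
    qed
    also have "\<dots> = t / 2 * \<mu> + c / (2 * t) * Pc"
      using Li L2_sq_int[OF pL] Lint unfolding Pc_def by simp
    finally show ?thesis using P1 by simp
  qed
  have "Pc \<le> (1 + \<delta>) * \<mu>\<^sup>2"
    by (rule final_ineq[where m=\<mu>]) (use P2 d in \<open>auto simp: c_def \<mu>_def\<close>)
  then show ?thesis unfolding Pc_def \<mu>_def .
qed


lemma orth_inv: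
  fixes M :: "'a measure" and T :: "int^'d \<Rightarrow> 'a \<Rightarrow> 'a" and q :: nat and r g :: "'a \<Rightarrow> complex"
  assumes P: "prob_space M" and ERG: "ergodic_action M T" and q: "q > 0"
    and rL: "r \<in> L2 M" and rE: "\<And>v. v \<in> Eig M T (Rq_star q) \<Longrightarrow> L2_inner M r v = 0"
    and r0: "integral\<^sup>L M r = 0" and gI: "g \<in> inv_funs M T q"
  shows "L2_inner M r g = 0"
proof -
  from ERG have MP: "mp_action M T" unfolding ergodic_action_def by (rule conjunct1)
  have gL: "g \<in> L2 M" and inv: "\<And>a. AE x in M. g (T (int q *s a) x) = g x"
    using gI unfolding inv_funs_def by auto
  let ?K = "Kset q :: (int^'d) set"
  have gkL: "gk T q g k \<in> L2 M" for k using gk_L2[OF P MP q gL] .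
  have "L2_inner M r g = (\<integral>x. r x * cnj (\<Sum>k\<in>?K. gk T q g k x) \<partial>M)"
    unfolding L2_inner_def by (rule Bochner_Integration.integral_cong[OF refl]) (simp add: gk_sum[OF P MP q])
  also have "\<dots> = (\<integral>x. (\<Sum>k\<in>?K. r x * cnj (gk T q g k x)) \<partial>M)" by (simp add: sum_distrib_left)
  also have "\<dots> = (\<Sum>k\<in>?K. \<integral>x. r x * cnj (gk T q g k x) \<partial>M)"
    using Bochner_Integration.integral_sum[of ?K M "\<lambda>k x. r x * cnj (gk T q g k x)"] L2_prod_int[OF rL gkL]
    by simp
  also have "\<dots> = 0"
  proof (rule sum.neutral, rule ballI)
    fix k assume k: "k \<in> ?K"
    have eig: "eigenfun M T (\<lambda>a. Eq q (dotv k a)) (gk T q g k)" using gk_eigen[OF P MP q gL inv] .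
    show "(\<integral>x. r x * cnj (gk T q g k x) \<partial>M) = 0"
    proof (cases "k = 0")
      case True
      have "AE x in M. gk T q g k (T a x) = gk T q g k x" for a
        using eig True unfolding eigenfun_def by simp
      then obtain c where c: "AE x in M. gk T q g k x = c" using erg_const[OF P ERG gkL] by blast
      have "(\<integral>x. r x * cnj (gk T q g k x) \<partial>M) = (\<integral>x. r x * cnj c \<partial>M)"
      proof (rule integral_cong_AE)
        show "(\<lambda>x. r x * cnj (gk T q g k x)) \<in> borel_measurable M"
          using L2_prod_int[OF rL gkL] by (rule borel_measurable_integrable)
        show "(\<lambda>x. r x * cnj c) \<in> borel_measurable M"
          by (rule borel_measurable_times[OF L2_meas[OF rL] borel_measurable_const])
        show "AE x in M. r x * cnj (gk T q g k x) = r x * cnj c" using c by eventually_elim simp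
      qed
      also have "\<dots> = integral\<^sup>L M r * cnj c" by simp
      finally show ?thesis using r0 by simp
    next
      case False
      have "gk T q g k \<in> Eig M T (Rq_star q)" by (rule eig_in_Eig[OF eig chi_Rq_star[OF q k False]])
      then show ?thesis using rE unfolding L2_inner_def by simp
    qed
  qed
  finally show ?thesis .
qed

lemma cmod_add_real_sq: "(cmod (complex_of_real a + z))\<^sup>2 = a\<^sup>2 + 2 * a * Re z + (cmod z)\<^sup>2"
proof -
  have "(cmod (complex_of_real a + z))\<^sup>2 = (a + Re z)\<^sup>2 + (Im z)\<^sup>2" by (simp add: cmod_power2)
  also have "\<dots> = a\<^sup>2 + 2 * a * Re z + ((Re z)\<^sup>2 + (Im z)\<^sup>2)" by (simp add: power2_eq_square algebra_simps)
  also have "(Re z)\<^sup>2 + (Im z)\<^sup>2 = (cmod z)\<^sup>2" by (simp add: cmod_power2)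
  finally show ?thesis .
qed

theorem proposition3p6:
  fixes M :: "'a measure" and T :: "int^'d \<Rightarrow> 'a \<Rightarrow> 'a"
    and q :: nat and \<delta> :: real and B :: "'a set" and h :: "'a \<Rightarrow> complex"
  assumes "prob_space M"
    and "ergodic_action M T"
    and "q > 0" and "\<delta> > 0"
    and "B \<in> sets M"
    and "equidistributed M T q \<delta> B"
    and "is_orth_proj M (indicator B) (Eig M T (Rq_star q)) h"
  shows "is_orth_proj M (indicator B) (inv_funs M T q) (\<lambda>x. complex_of_real (measure M B) + h x)
    \<and> L2_norm M h \<le> sqrt (2 * \<delta> + \<delta>\<^sup>2) * measure M B"
proof -
  note P = assms(1) and ERG = assms(2) and q = assms(3) and d = assms(4) and Bm = assms(5)
    and eqd = assms(6)
  interpret prob_space M by (rule P)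
  from ERG have MP: "mp_action M T" unfolding ergodic_action_def by (rule conjunct1)
  define \<mu> where "\<mu> = measure M B"
  have hE: "h \<in> Eig M T (Rq_star q)"
    and hO: "\<And>v. v \<in> Eig M T (Rq_star q) \<Longrightarrow> L2_inner M (\<lambda>x. indicator B x - h x) v = 0"
    using assms(7) unfolding is_orth_proj_def by auto
  have hL: "h \<in> L2 M" using hE unfolding Eig_def by auto
  have h0: "integral\<^sup>L M h = 0" using Eig_int_zero[OF P MP hE] .
  have hinv: "AE x in M. h (T (int q *s a) x) = h x" for a using Eig_inv[OF P MP hE] .
  have fL: "(indicator B :: 'a \<Rightarrow> complex) \<in> L2 M" using L2_indicator[OF P Bm] .
  define p where "p = (\<lambda>x. complex_of_real \<mu> + h x)"
  have pL: "p \<in> L2 M" unfolding p_def using L2_add[OF L2_const[OF P] hL] .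
  have pI: "p \<in> inv_funs M T q"
    unfolding inv_funs_def using pL hinv by (auto simp: p_def)
  define r where "r = (\<lambda>x. indicator B x - p x)"
  have rL: "r \<in> L2 M" unfolding r_def using L2_diff[OF fL pL] .
  have intf: "(\<integral>x. indicator B x \<partial>M) = complex_of_real \<mu>"
  proof -
    have "(\<integral>x. indicator B x \<partial>M) = (\<integral>x. complex_of_real (indicator B x) \<partial>M)"
      by (simp only: ofr_ind)
    also have "\<dots> = complex_of_real (\<integral>x. indicator B x \<partial>M)" by (rule integral_complex_of_real)
    also have "(\<integral>x. indicator B x \<partial>M) = \<mu>"
      unfolding \<mu>_def by (simp only: Bochner_Integration.integral_indicator sets.Int_space_eq2[OF Bm])
    finally show ?thesis .
  qed
  have r0: "integral\<^sup>L M r = 0"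
  proof -
    have "integral\<^sup>L M r = (\<integral>x. indicator B x \<partial>M) - integral\<^sup>L M p"
      unfolding r_def using L2_int[OF P fL] L2_int[OF P pL] by simp
    also have "integral\<^sup>L M p = complex_of_real \<mu> + integral\<^sup>L M h"
      unfolding p_def using L2_int[OF P hL] prob_space by simp
    finally show ?thesis using intf h0 by simp
  qed
  have rE: "L2_inner M r v = 0" if v: "v \<in> Eig M T (Rq_star q)" for v
  proof -
    have vL: "v \<in> L2 M" using v unfolding Eig_def by auto
    have v0: "integral\<^sup>L M v = 0" using Eig_int_zero[OF P MP v] .
    have i1: "integrable M (\<lambda>x. (indicator B x - h x) * cnj (v x))"
      using L2_prod_int[OF L2_diff[OF fL hL] vL] .
    have i2: "integrable M (\<lambda>x. complex_of_real \<mu> * cnj (v x))"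
      using L2_int[OF P vL] by simp
    have "L2_inner M r v = (\<integral>x. (indicator B x - h x) * cnj (v x) - complex_of_real \<mu> * cnj (v x) \<partial>M)"
      unfolding L2_inner_def r_def p_def by (simp add: algebra_simps)
    also have "\<dots> = L2_inner M (\<lambda>x. indicator B x - h x) v - complex_of_real \<mu> * cnj (integral\<^sup>L M v)"
      unfolding L2_inner_def using i1 i2 by simp
    also have "\<dots> = 0" using hO[OF v] v0 by simp
    finally show ?thesis .
  qed
  have part1: "is_orth_proj M (indicator B) (inv_funs M T q) p"
    unfolding is_orth_proj_def
  proof (intro conjI pI ballI)
    fix g assume "g \<in> inv_funs M T q"
    then show "L2_inner M (\<lambda>x. indicator B x - p x) g = 0"
      using orth_inv[OF P ERG q rL rE r0] unfolding r_def by blast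
  qed
  have orth_p: "L2_inner M (\<lambda>x. indicator B x - p x) p = 0"
    using part1 pI unfolding is_orth_proj_def by blast
  have Pb: "(\<integral>x. (cmod (p x))\<^sup>2 \<partial>M) \<le> (1 + \<delta>) * \<mu>\<^sup>2"
    using norm_bound[OF P MP Bm eqd d pI orth_p] unfolding \<mu>_def .
  have hRe: "integrable M (\<lambda>x. Re (h x))" using L2_int[OF P hL] by simp
  have "(\<integral>x. (cmod (p x))\<^sup>2 \<partial>M) = (\<integral>x. \<mu>\<^sup>2 + 2 * \<mu> * Re (h x) + (cmod (h x))\<^sup>2 \<partial>M)"
    unfolding p_def cmod_add_real_sq ..
  also have "\<dots> = \<mu>\<^sup>2 + 2 * \<mu> * (\<integral>x. Re (h x) \<partial>M) + (\<integral>x. (cmod (h x))\<^sup>2 \<partial>M)"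
    using hRe L2_sq_int[OF hL] prob_space by simp
  also have "(\<integral>x. Re (h x) \<partial>M) = Re (integral\<^sup>L M h)" using integral_Re[OF L2_int[OF P hL]] .
  finally have "(\<integral>x. (cmod (p x))\<^sup>2 \<partial>M) = \<mu>\<^sup>2 + (\<integral>x. (cmod (h x))\<^sup>2 \<partial>M)" using h0 by simp
  note eqP = this
  have dist: "(1 + \<delta>) * \<mu>\<^sup>2 = \<mu>\<^sup>2 + \<delta> * \<mu>\<^sup>2" by (simp add: algebra_simps)
  have H1: "(\<integral>x. (cmod (h x))\<^sup>2 \<partial>M) \<le> \<delta> * \<mu>\<^sup>2" using eqP Pb dist by linarith
  have dd: "\<delta> \<le> 2 * \<delta> + \<delta>\<^sup>2" using d zero_le_power2[of \<delta>] by linarith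
  have H2: "\<delta> * \<mu>\<^sup>2 \<le> (2 * \<delta> + \<delta>\<^sup>2) * \<mu>\<^sup>2" by (rule mult_right_mono[OF dd zero_le_power2])
  have hb: "(\<integral>x. (cmod (h x))\<^sup>2 \<partial>M) \<le> (2 * \<delta> + \<delta>\<^sup>2) * \<mu>\<^sup>2" using H1 H2 by linarith
  have mu0: "0 \<le> \<mu>" unfolding \<mu>_def by simp
  have "L2_norm M h \<le> sqrt ((2 * \<delta> + \<delta>\<^sup>2) * \<mu>\<^sup>2)"
    unfolding L2_norm_def using hb by (rule real_sqrt_le_mono)
  also have "\<dots> = sqrt (2 * \<delta> + \<delta>\<^sup>2) * \<mu>" using mu0 by (simp add: real_sqrt_mult)
  finally have part2: "L2_norm M h \<le> sqrt (2 * \<delta> + \<delta>\<^sup>2) * measure M B" unfolding \<mu>_def .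
  show ?thesis using part1 part2 unfolding p_def \<mu>_def by blast
qed


end
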